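(* Let $n\ge1$, let $\lambda^1,\lambda^2$ be partitions with $|\lambda^1|+|\lambda^2|=n$, and let $H=H_{\lambda^1,\lambda^2}\subset G_n$. If $$\big\langle \mathrm{Res}^{G_n}_{H}\chi_n,\ \mathrm{Res}^{G_n}_{H}\varepsilon_n\cdot\varepsilon\cdot\psi\big\rangle_H\neq 0,$$ then every part of $\lambda^1$ and every part of $\lambda^2$ is a power of $2$ (with $1=2^0$ allowed).
   Context: $G_n$ is the signed permutation group (bijections of $\{\pm1,\dots,\pm n\}$ commuting with negation, viewed as $n\times n$ signed permutation matrices). $g\in G_n$ satisfies condition (L) if for every $i$ the points $i$ and $-i$ lie in different orbits of $\langle g\rangle$ on $\{\pm1,\dots,\pm n\}$; $\chi_n$ is the indicator function of (L) on $G_n$. $\varepsilon_n(g)$ is the sign of the underlying permutation of $g$ (signs forgotten). For $v\ge1$ let $g_v$ be the $v\times v$ cyclic permutation matrix with $(g_v)_{i+1,i}=1$ (indices mod $v$); the block group $\mathcal{B}_{v,m}\cong(\mu_2\times\mu_v)^m\rtimes S_m$ consists of $(s_1,a_1,\dots,s_m,a_m;\sigma)$ with $s_i\in\{\pm1\}$, $a_i\in\mathbb{Z}/v$, $\sigma\in S_m$, realized as the $vm\times vm$ matrix whose $(\sigma(i),i)$ $v\times v$ block is $s_ig_v^{a_i}$. For a partition $\lambda$ let $m_v(\lambda)$ be the multiplicity of $v$. $H_{\lambda^1,\lambda^2}$ is the subgroup of $G_n$ embedded block-diagonally as $\prod_{v: m_v(\lambda^1)>0}\mathcal{B}_{v,m_v(\lambda^1)}\times\prod_{v:m_v(\lambda^2)>0}\mathcal{B}_{v,m_v(\lambda^2)}$.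 On $H$, $\psi$ is the product over all blocks of $\omega_v^{a_1+\dots+a_m}$ ($\omega_v=e^{2\pi i/v}$), and $\varepsilon$ is the product of $\operatorname{sgn}(\sigma)$ over the blocks coming from $\lambda^1$ only. $\langle\alpha,\beta\rangle_H=\frac1{|H|}\sum_{h\in H}\alpha(h)\overline{\beta(h)}$. *)

theory Defs
  imports Complex_Main "HOL-Library.Multiset" "HOL-Combinatorics.Permutations"
begin

(* Signed permutations of {+-1,...,+-n} are represented as functions g :: int => int
   with g (-x) = - g x (and g fixing everything outside {+-1..+-n}). *)

(* condition (L): i and -i lie in different orbits of <g> (g has finite order,
   so the orbit of i under <g> is {(g^^k) i | k :: nat}) *)
definition chi :: "nat \<Rightarrow> (int \<Rightarrow> int) \<Rightarrow> bool" where
  "chi n g \<longleftrightarrow> (\<forall>i\<in>{1..int n}. \<forall>k::nat. (g ^^ k) i \<noteq> - i)"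

definition underlying_perm :: "nat \<Rightarrow> (int \<Rightarrow> int) \<Rightarrow> nat \<Rightarrow> nat" where
  "underlying_perm n g x = (if 1 \<le> x \<and> x \<le> n then nat \<bar>g (int x)\<bar> else x)"

definition eps_n :: "nat \<Rightarrow> (int \<Rightarrow> int) \<Rightarrow> int" where
  "eps_n n g = sign (underlying_perm n g)"

(* an element (s_1,a_1,...,s_m,a_m; sigma) of B_{v,m}, with 0-based indices i < m *)
type_synonym belt = "(nat \<Rightarrow> int) \<times> (nat \<Rightarrow> nat) \<times> (nat \<Rightarrow> nat)"

definition Bset :: "nat \<Rightarrow> nat \<Rightarrow> belt set" where
  "Bset v m = {(s, a, \<sigma>). (\<forall>i<m. s i \<in> {-1, 1}) \<and> (\<forall>i\<ge>m. s i = 1)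
       \<and> (\<forall>i<m. a i < v) \<and> (\<forall>i\<ge>m. a i = 0) \<and> \<sigma> permutes {..<m}}"

(* action of the block matrix: basis vector at (block i, position k) (0-based, local index
   t = i*v + k) goes to s_i times the basis vector at (block sigma(i), position k + a_i mod v),
   since block (sigma(i),i) is s_i g_v^{a_i} and g_v e_k = e_{k+1}.
   off is the offset of the block group on the diagonal; result is a signed global index. *)
definition act_block :: "nat \<Rightarrow> belt \<Rightarrow> nat \<Rightarrow> nat \<Rightarrow> int" where
  "act_block v h off t = (case h of (s, a, \<sigma>) \<Rightarrow>
      s (t div v) * int (off + \<sigma> (t div v) * v + (t mod v + a (t div v)) mod v + 1))"

(* block descriptors: (v, m_v, comes_from_lambda1) *)
definition blocks :: "nat multiset \<Rightarrow> nat multiset \<Rightarrow> (nat \<times> nat \<times> bool) list" where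
  "blocks l1 l2 =
     map (\<lambda>v. (v, count l1 v, True)) (sorted_list_of_set (set_mset l1)) @
     map (\<lambda>v. (v, count l2 v, False)) (sorted_list_of_set (set_mset l2))"

(* image of the positive index p (1-based) under the block-diagonal embedding *)
fun emb_pos :: "(nat \<times> nat \<times> bool) list \<Rightarrow> belt list \<Rightarrow> nat \<Rightarrow> nat \<Rightarrow> int" where
  "emb_pos ((v, m, b) # bs) (h # hs) off p =
     (if p \<le> off + v * m then act_block v h off (p - off - 1)
      else emb_pos bs hs (off + v * m) p)"
| "emb_pos _ _ off p = int p"

definition emb :: "(nat \<times> nat \<times> bool) list \<Rightarrow> belt list \<Rightarrow> int \<Rightarrow> int" where
  "emb bs hs x = (if x > 0 then emb_pos bs hs 0 (nat x)
                  else if x < 0 then - emb_pos bs hs 0 (nat (- x)) else 0)"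

(* the group H_{lambda1,lambda2}, as the set of tuples of block elements *)
definition Hset :: "nat multiset \<Rightarrow> nat multiset \<Rightarrow> belt list set" where
  "Hset l1 l2 = listset (map (\<lambda>(v, m, b). Bset v m) (blocks l1 l2))"

definition psi :: "(nat \<times> nat \<times> bool) list \<Rightarrow> belt list \<Rightarrow> complex" where
  "psi bs hs = prod_list (map (\<lambda>((v, m, b), (s, a, \<sigma>)).
       cis (2 * pi / real v) ^ (\<Sum>i<m. a i)) (zip bs hs))"

definition epsH :: "(nat \<times> nat \<times> bool) list \<Rightarrow> belt list \<Rightarrow> int" where
  "epsH bs hs = prod_list (map (\<lambda>((v, m, b), (s, a, \<sigma>)).
       if b then sign \<sigma> else 1) (zip bs hs))"

definition inner_H :: "nat \<Rightarrow> nat multiset \<Rightarrow> nat multiset \<Rightarrow> complex" where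
  "inner_H n l1 l2 = (let bs = blocks l1 l2 in
     (1 / of_nat (card (Hset l1 l2))) *
     (\<Sum>h\<in>Hset l1 l2. (if chi n (emb bs h) then 1 else 0) *
        cnj (of_int (eps_n n (emb bs h)) * of_int (epsH bs h) * psi bs h)))"

definition is_partition :: "nat multiset \<Rightarrow> bool" where
  "is_partition l \<longleftrightarrow> 0 \<notin># l"

end

theory Submission
  imports Defs
begin


definition wt :: "nat \<times> nat \<times> bool \<Rightarrow> nat" where "wt x = (case x of (v,m,b) \<Rightarrow> v*m)"
definition offs :: "(nat \<times> nat \<times> bool) list \<Rightarrow> nat \<Rightarrow> nat" where
  "offs bs i = sum_list (map wt (take i bs))"

lemma in_listset: "hs \<in> listset As \<longleftrightarrow> length hs = length As \<and> (\<forall>i<length As. hs!i \<in> As!i)"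
proof (induction As arbitrary: hs)
  case Nil then show ?case by auto
next
  case (Cons A As)
  show ?case
  proof (cases hs)
    case Nil then show ?thesis by (auto simp: set_Cons_def)
  next
    case (Cons h hs')
    then show ?thesis using Cons.IH by (auto simp: set_Cons_def nth_Cons split: nat.splits)
  qed
qed

lemma offs_Cons0[simp]: "offs (x#bs) 0 = 0" by (simp add: offs_def)
lemma offs_Cons_Suc[simp]: "offs (x#bs) (Suc i) = wt x + offs bs i" by (simp add: offs_def)

lemma emb_pos_at:
  "length hs = length bs \<Longrightarrow> i < length bs \<Longrightarrow> bs!i = (v,m,b) \<Longrightarrow> off + offs bs i < p \<Longrightarrow>
   p \<le> off + offs bs i + v*m \<Longrightarrow>
   emb_pos bs hs off p = act_block v (hs!i) (off + offs bs i) (p - (off + offs bs i) - 1)"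
proof (induction bs arbitrary: hs i off)
  case Nil then show ?case by simp
next
  case (Cons x bs)
  obtain h hs' where hs: "hs = h # hs'" using Cons.prems(1) by (cases hs) auto
  obtain v0 m0 b0 where x: "x = (v0,m0,b0)" by (cases x) auto
  show ?case
  proof (cases i)
    case 0 then show ?thesis using Cons.prems hs x by simp
  next
    case (Suc i')
    have "p > off + v0*m0" using Cons.prems Suc x by (simp add: wt_def)
    then have "emb_pos (x#bs) hs off p = emb_pos bs hs' (off + v0*m0) p" using hs x by simp
    also have "\<dots> = act_block v (hs'!i') (off + v0*m0 + offs bs i') (p - (off + v0*m0 + offs bs i') - 1)"
      using Cons.IH[of hs' i' "off + v0*m0"] Cons.prems hs Suc x by (simp add: wt_def add.assoc)
    finally show ?thesis using hs Suc x by (simp add: wt_def add.assoc)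
  qed
qed

lemma emb_pos_beyond:
  "off + sum_list (map wt bs) < p \<Longrightarrow> emb_pos bs hs off p = int p"
proof (induction bs arbitrary: hs off)
  case Nil then show ?case by (cases hs) auto
next
  case (Cons x bs)
  obtain v0 m0 b0 where x: "x = (v0,m0,b0)" by (cases x) auto
  show ?case
  proof (cases hs)
    case Nil then show ?thesis using x by simp
  next
    case (Cons h hs')
    then show ?thesis using Cons.prems Cons.IH[of "off+v0*m0" hs'] x by (simp add: wt_def add.assoc)
  qed
qed

lemma cover:
  "off < p \<Longrightarrow> p \<le> off + sum_list (map wt bs) \<Longrightarrow>
   \<exists>i<length bs. off + offs bs i < p \<and> p \<le> off + offs bs i + wt (bs!i)"
proof (induction bs arbitrary: off)
  case Nil then show ?case by simp
next
  case (Cons x bs)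
  show ?case
  proof (cases "p \<le> off + wt x")
    case True then show ?thesis using Cons.prems by (intro exI[of _ 0]) auto
  next
    case False
    then obtain i where "i < length bs" "off + wt x + offs bs i < p" "p \<le> off + wt x + offs bs i + wt (bs!i)"
      using Cons.IH[of "off + wt x"] Cons.prems by (auto simp: add.assoc)
    then show ?thesis by (intro exI[of _ "Suc i"]) (auto simp: add.assoc)
  qed
qed

lemma offs_mono: "i < i' \<Longrightarrow> i' \<le> length bs \<Longrightarrow> offs bs i + wt (bs!i) \<le> offs bs i'"
proof -
  assume a: "i < i'" "i' \<le> length bs"
  have "offs bs (Suc i) = offs bs i + wt (bs!i)"
    using a by (simp add: offs_def take_Suc_conv_app_nth)
  moreover have "offs bs (Suc i) \<le> offs bs i'"
  proof -
    have "take i' bs = take (Suc i) bs @ drop (Suc i) (take i' bs)" using a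
      by (metis Suc_leI append_take_drop_id min.absorb1 take_take)
    then show ?thesis unfolding offs_def by (metis le_add1 sum_list_append map_append)
  qed
  ultimately show ?thesis by simp
qed

lemma offs_total: "i < length bs \<Longrightarrow> offs bs i + wt (bs!i) \<le> sum_list (map wt bs)"
  using offs_mono[of i "length bs" bs] by (simp add: offs_def)

lemma group_unique:
  assumes "i < length bs" "i' < length bs" "offs bs i < p" "p \<le> offs bs i + wt (bs!i)"
     "offs bs i' < p" "p \<le> offs bs i' + wt (bs!i')"
  shows "i = i'"
proof (rule ccontr)
  assume "i \<noteq> i'"
  then consider "i < i'" | "i' < i" by linarith
  then show False
  proof cases
    case 1 then show ?thesis using offs_mono[of i i' bs] assms by linarith
  next
    case 2 then show ?thesis using offs_mono[of i' i bs] assms by linarith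
  qed
qed



definition databad :: "nat \<Rightarrow> belt \<Rightarrow> nat \<Rightarrow> bool" where
  "databad v h j = (case h of (s,a,\<sigma>) \<Rightarrow> \<exists>u. (\<Prod>w<u. s ((\<sigma>^^w) j)) = -1 \<and> (\<sigma>^^u) j = j
      \<and> int v dvd (\<Sum>w<u. int (a ((\<sigma>^^w) j))))"

lemma odd_mult:
  assumes odd: "\<And>x. g (-x) = - g x" and S: "S \<in> {-1,1::int}"
  shows "g (S * x) = S * g x"
  using S odd by auto

lemma iter_formula:
  fixes g :: "int \<Rightarrow> int"
  assumes odd: "\<And>x. g (-x) = - g x"
    and step: "\<And>j q. j < m \<Longrightarrow> q < v \<Longrightarrow> g (int (off+1+j*v+q)) = s j * int (off+1+\<sigma> j * v + (q + a j) mod v)"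
    and perm: "\<sigma> permutes {..<m}"
    and sv: "\<And>i. i < m \<Longrightarrow> s i \<in> {-1,1}"
    and j: "j < m" and q: "q < v"
  shows "(g^^u) (int (off+1+j*v+q)) = (\<Prod>w<u. s ((\<sigma>^^w) j)) * int (off+1+(\<sigma>^^u) j * v + (q + (\<Sum>w<u. a ((\<sigma>^^w) j))) mod v)
     \<and> (\<Prod>w<u. s ((\<sigma>^^w) j)) \<in> {-1,1} \<and> (\<sigma>^^u) j < m"
proof (induction u)
  case 0 then show ?case using j q by simp
next
  case (Suc u)
  define S where "S = (\<Prod>w<u. s ((\<sigma>^^w) j))"
  define A where "A = (\<Sum>w<u. a ((\<sigma>^^w) j))"
  define k where "k = (\<sigma>^^u) j"
  have IH: "(g^^u) (int (off+1+j*v+q)) = S * int (off+1+k*v+(q+A) mod v)" "S \<in> {-1,1}" "k < m"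
    using Suc.IH by (auto simp: S_def A_def k_def)
  have vpos: "v > 0" using q by simp
  have "(g^^Suc u) (int (off+1+j*v+q)) = g (S * int (off+1+k*v+(q+A) mod v))" using IH by simp
  also have "\<dots> = S * g (int (off+1+k*v+(q+A) mod v))" using odd_mult[of g S, OF odd IH(2)] by simp
  also have "\<dots> = S * (s k * int (off+1+\<sigma> k * v + ((q+A) mod v + a k) mod v))"
    using step[OF IH(3), of "(q+A) mod v"] vpos by simp
  also have "\<dots> = (S * s k) * int (off+1+\<sigma> k * v + (q + (A + a k)) mod v)"
    by (simp add: mod_add_left_eq add.assoc)
  finally have 1: "(g^^Suc u) (int (off+1+j*v+q)) = (S * s k) * int (off+1+\<sigma> k * v + (q + (A + a k)) mod v)" .
  have 2: "\<sigma> k < m" using permutes_in_image[OF perm, of k] IH(3) by simp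
  have 3: "S * s k \<in> {-1,1}" using IH(2) sv[OF IH(3)] by auto
  show ?case using 1 2 3 by (simp add: S_def A_def k_def)
qed

lemma bad_char:
  fixes g :: "int \<Rightarrow> int"
  assumes odd: "\<And>x. g (-x) = - g x"
    and step: "\<And>j q. j < m \<Longrightarrow> q < v \<Longrightarrow> g (int (off+1+j*v+q)) = s j * int (off+1+\<sigma> j * v + (q + a j) mod v)"
    and perm: "\<sigma> permutes {..<m}"
    and sv: "\<And>i. i < m \<Longrightarrow> s i \<in> {-1,1}"
    and j: "j < m" and q: "q < v"
  shows "(\<exists>u. (g^^u) (int (off+1+j*v+q)) = - int (off+1+j*v+q)) \<longleftrightarrow> databad v (s,a,\<sigma>) j"
proof -
  have key: "(g^^u) (int (off+1+j*v+q)) = - int (off+1+j*v+q) \<longleftrightarrow>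
     (\<Prod>w<u. s ((\<sigma>^^w) j)) = -1 \<and> (\<sigma>^^u) j = j \<and> int v dvd (\<Sum>w<u. int (a ((\<sigma>^^w) j)))" for u
  proof -
    define S where "S = (\<Prod>w<u. s ((\<sigma>^^w) j))"
    define A where "A = (\<Sum>w<u. a ((\<sigma>^^w) j))"
    define k where "k = (\<sigma>^^u) j"
    have F: "(g^^u) (int (off+1+j*v+q)) = S * int (off+1+k*v+(q+A) mod v)" "S \<in> {-1,1}"
      using iter_formula[OF odd step perm sv j q, of u] by (auto simp: S_def A_def k_def)
    have vpos: "v > 0" using q by simp
    have r: "(q+A) mod v < v" using vpos by simp
    have eq: "off+1+k*v+(q+A) mod v = off+1+j*v+q \<longleftrightarrow> k = j \<and> (q+A) mod v = q"
    proof
      assume h: "off+1+k*v+(q+A) mod v = off+1+j*v+q"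
      then have "k*v+(q+A) mod v = j*v+q" by simp
      then have "(k*v+(q+A) mod v) div v = (j*v+q) div v" "(k*v+(q+A) mod v) mod v = (j*v+q) mod v" by simp_all
      then show "k = j \<and> (q+A) mod v = q" using vpos q r by simp
    qed auto
    have modq: "(q+A) mod v = q \<longleftrightarrow> v dvd A"
    proof
      assume "(q+A) mod v = q"
      then have "(q+A) mod v = (q + 0) mod v" using q by simp
      then show "v dvd A" by (simp add: mod_eq_dvd_iff_nat dvd_eq_mod_eq_0 mod_add_left_eq)
    next
      assume "v dvd A" then show "(q+A) mod v = q" using q by (metis add.right_neutral dvd_eq_mod_eq_0 mod_add_right_eq mod_less)
    qed
    have Aint: "int A = (\<Sum>w<u. int (a ((\<sigma>^^w) j)))" by (simp add: A_def)
    have "(g^^u) (int (off+1+j*v+q)) = - int (off+1+j*v+q) \<longleftrightarrow> S = -1 \<and> off+1+k*v+(q+A) mod v = off+1+j*v+q"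
    proof
      assume h: "(g^^u) (int (off+1+j*v+q)) = - int (off+1+j*v+q)"
      show "S = -1 \<and> off+1+k*v+(q+A) mod v = off+1+j*v+q"
      proof (cases "S = 1")
        case True
        have "int (off+1+k*v+(q+A) mod v) > 0" "int (off+1+j*v+q) > 0" by (simp_all only: of_nat_0_less_iff)
        moreover have "int (off+1+k*v+(q+A) mod v) = - int (off+1+j*v+q)" using h F(1) True by simp
        ultimately show ?thesis by linarith
      next
        case False then have "S = -1" using F by auto
        moreover have "- int (off+1+k*v+(q+A) mod v) = - int (off+1+j*v+q)" using h F(1) \<open>S = -1\<close> by simp
        then have "off+1+k*v+(q+A) mod v = off+1+j*v+q" by (simp only: neg_equal_iff_equal of_nat_eq_iff)
        then show ?thesis using \<open>S = -1\<close> by simp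
      qed
    next
      assume c: "S = -1 \<and> off+1+k*v+(q+A) mod v = off+1+j*v+q"
      show "(g^^u) (int (off+1+j*v+q)) = - int (off+1+j*v+q)"
        using F(1) c by (metis mult_minus1)
    qed
    also have "\<dots> \<longleftrightarrow> S = -1 \<and> k = j \<and> v dvd A" using eq modq by simp
    also have "\<dots> \<longleftrightarrow> S = -1 \<and> k = j \<and> int v dvd int A" by (simp only: of_nat_dvd_iff)
    finally show ?thesis unfolding Aint S_def k_def .
  qed
  show ?thesis unfolding databad_def using key by simp
qed



lemma sum_add_split: "(\<Sum>w<u+(n::nat). (F::nat\<Rightarrow>'a::comm_monoid_add) w) = (\<Sum>w<u. F w) + (\<Sum>w<n. F (u+w))"
  by (induction n) (simp_all add: add.assoc)

lemma prod_add_split: "(\<Prod>w<u+(n::nat). (F::nat\<Rightarrow>'a::comm_monoid_mult) w) = (\<Prod>w<u. F w) * (\<Prod>w<n. F (u+w))"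
  by (induction n) (simp_all add: mult.assoc)

lemma sum_periodic:
  fixes F :: "nat \<Rightarrow> 'a::comm_semiring_1"
  assumes "\<And>w. F (u+w) = F w"
  shows "(\<Sum>w<u*k. F w) = of_nat k * (\<Sum>w<u. F w)"
proof (induction k)
  case 0 then show ?case by simp
next
  case (Suc k)
  have "(\<Sum>w<u*Suc k. F w) = (\<Sum>w<u+u*k. F w)" by simp
  also have "\<dots> = (\<Sum>w<u. F w) + (\<Sum>w<u*k. F w)" using sum_add_split[of F u "u*k"] assms by simp
  finally show ?case using Suc by (simp add: algebra_simps)
qed

lemma prod_periodic:
  fixes F :: "nat \<Rightarrow> 'a::comm_monoid_mult"
  assumes "\<And>w. F (u+w) = F w"
  shows "(\<Prod>w<u*k. F w) = (\<Prod>w<u. F w) ^ k"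
proof (induction k)
  case 0 then show ?case by simp
next
  case (Suc k)
  have "(\<Prod>w<u*Suc k. F w) = (\<Prod>w<u+u*k. F w)" by simp
  also have "\<dots> = (\<Prod>w<u. F w) * (\<Prod>w<u*k. F w)" using prod_add_split[of F u "u*k"] assms by simp
  finally show ?case using Suc by (simp add: algebra_simps)
qed

lemma funpow_periodic: "(f^^u) j = j \<Longrightarrow> (f^^(u*k)) j = j"
proof (induction k)
  case 0 then show ?case by simp
next
  case (Suc k)
  have "(f^^(u*Suc k)) j = (f^^u) ((f^^(u*k)) j)" by (simp add: funpow_add)
  then show ?case using Suc by simp
qed

lemma transfer:
  fixes c :: int
  assumes b: "odd b" and vc: "int v dvd int b * c"
    and aa: "\<And>i. int v dvd (int (a' i) - int (a i) - (if i = 0 then c else 0))"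
    and bad: "databad v (s,a,\<sigma>) j"
  shows "databad v (s,a',\<sigma>) j"
proof -
  obtain u where u: "(\<Prod>w<u. s ((\<sigma>^^w) j)) = -1" "(\<sigma>^^u) j = j"
      "int v dvd (\<Sum>w<u. int (a ((\<sigma>^^w) j)))"
    using bad by (auto simp: databad_def)
  have per: "(\<sigma>^^(u+w)) j = (\<sigma>^^w) j" for w
  proof -
    have "(\<sigma>^^(u+w)) j = (\<sigma>^^(w+u)) j" by (simp only: add.commute)
    also have "\<dots> = (\<sigma>^^w) ((\<sigma>^^u) j)" by (simp only: funpow_add comp_apply)
    finally show ?thesis using u(2) by simp
  qed
  define N where "N = (\<Sum>w<u. (if (\<sigma>^^w) j = 0 then 1 else 0::int))"
  have 1: "(\<Prod>w<u*b. s ((\<sigma>^^w) j)) = -1"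
    using prod_periodic[of "\<lambda>w. s ((\<sigma>^^w) j)" u b] per u(1) b by simp
  have 2: "(\<sigma>^^(u*b)) j = j" by (rule funpow_periodic[OF u(2)])
  have sa: "(\<Sum>w<u*b. int (a ((\<sigma>^^w) j))) = int b * (\<Sum>w<u. int (a ((\<sigma>^^w) j)))"
    using sum_periodic[of "\<lambda>w. int (a ((\<sigma>^^w) j))" u b] per by simp
  have sN: "(\<Sum>w<u*b. (if (\<sigma>^^w) j = 0 then 1 else 0::int)) = int b * N"
    using sum_periodic[of "\<lambda>w. (if (\<sigma>^^w) j = 0 then 1 else 0::int)" u b] per by (simp add: N_def)
  have d: "int v dvd (\<Sum>w<u*b. int (a' ((\<sigma>^^w) j)) - int (a ((\<sigma>^^w) j)) - (if (\<sigma>^^w) j = 0 then c else 0))"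
    by (rule dvd_sum) (rule aa)
  have e: "(\<Sum>w<u*b. int (a' ((\<sigma>^^w) j)) - int (a ((\<sigma>^^w) j)) - (if (\<sigma>^^w) j = 0 then c else 0))
     = (\<Sum>w<u*b. int (a' ((\<sigma>^^w) j))) - (\<Sum>w<u*b. int (a ((\<sigma>^^w) j))) - c * (\<Sum>w<u*b. (if (\<sigma>^^w) j = 0 then 1 else 0::int))"
  proof -
    have "(\<Sum>w<u*b. (if (\<sigma>^^w) j = 0 then c else 0)) = c * (\<Sum>w<u*b. (if (\<sigma>^^w) j = 0 then 1 else 0::int))"
      by (simp add: sum_distrib_left if_distrib cong: if_cong)
    then show ?thesis by (simp only: sum_subtractf)
  qed
  have f: "int v dvd (\<Sum>w<u*b. int (a ((\<sigma>^^w) j)))" using sa u(3) by simp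
  have g: "int v dvd c * (\<Sum>w<u*b. (if (\<sigma>^^w) j = 0 then 1 else 0::int))"
  proof -
    have "c * (int b * N) = (int b * c) * N" by (simp add: ac_simps)
    moreover have "int v dvd (int b * c) * N" using vc by (rule dvd_mult2)
    ultimately have "int v dvd c * (int b * N)" by metis
    then show ?thesis using sN by simp
  qed
  have "int v dvd (\<Sum>w<u*b. int (a' ((\<sigma>^^w) j)))"
  proof -
    have "(\<Sum>w<u*b. int (a' ((\<sigma>^^w) j))) = (\<Sum>w<u*b. int (a' ((\<sigma>^^w) j)) - int (a ((\<sigma>^^w) j)) - (if (\<sigma>^^w) j = 0 then c else 0))
       + (\<Sum>w<u*b. int (a ((\<sigma>^^w) j))) + c * (\<Sum>w<u*b. (if (\<sigma>^^w) j = 0 then 1 else 0::int))"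
      using e by linarith
    then show ?thesis using d f g by (simp add: dvd_add)
  qed
  then show ?thesis using 1 2 unfolding databad_def by auto
qed



lemma emb_odd: "emb bs hs (-x) = - emb bs hs x"
  by (simp add: emb_def)

lemma emb_pos_int: "x > 0 \<Longrightarrow> emb bs hs x = emb_pos bs hs 0 (nat x)"
  by (simp add: emb_def)

lemma emb_step:
  assumes len: "length hs = length bs" and i: "i < length bs" and bi: "bs!i = (v,m,b)"
    and hi: "hs!i = (s,a,\<sigma>)" and j: "j < m" and q: "q < v"
  shows "emb bs hs (int (offs bs i + 1 + j*v + q)) = s j * int (offs bs i + 1 + \<sigma> j * v + (q + a j) mod v)"
proof -
  have vpos: "v > 0" using q by simp
  have le: "j*v+q < v*m"
  proof -
    have "j*v+q < j*v + v" using q by simp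
    also have "\<dots> = (j+1)*v" by simp
    also have "\<dots> \<le> m*v" using j by (intro mult_right_mono) auto
    finally show ?thesis by (simp add: mult.commute)
  qed
  have "emb bs hs (int (offs bs i + 1 + j*v + q)) = emb_pos bs hs 0 (nat (int (offs bs i + 1 + j*v + q)))"
  proof -
    have "0 < int (offs bs i + 1 + j*v + q)" by (simp only: of_nat_0_less_iff)
    then show ?thesis by (rule emb_pos_int)
  qed
  also have "\<dots> = emb_pos bs hs 0 (offs bs i + 1 + j*v + q)" by (simp only: nat_int)
  also have "\<dots> = act_block v (hs!i) (offs bs i) (j*v+q)"
    using emb_pos_at[OF len i bi, of 0 "offs bs i + 1 + j*v + q"] le by simp
  also have "\<dots> = s j * int (offs bs i + 1 + \<sigma> j * v + (q + a j) mod v)"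
    using vpos q hi by (simp add: act_block_def)
  finally show ?thesis .
qed

lemma Bset_facts:
  assumes "(s,a,\<sigma>) \<in> Bset v m"
  shows "\<sigma> permutes {..<m}" "\<And>i. i < m \<Longrightarrow> s i \<in> {-1,1}" "\<And>i. i < m \<Longrightarrow> a i < v"
    "\<And>i. i \<ge> m \<Longrightarrow> s i = 1" "\<And>i. i \<ge> m \<Longrightarrow> a i = 0"
  using assms by (auto simp: Bset_def)

definition valid :: "(nat \<times> nat \<times> bool) list \<Rightarrow> belt list \<Rightarrow> bool" where
  "valid bs hs \<longleftrightarrow> length hs = length bs \<and> (\<forall>i<length bs. hs!i \<in> (case bs!i of (v,m,b) \<Rightarrow> Bset v m))"

lemma Hset_valid: "hs \<in> Hset l1 l2 \<longleftrightarrow> valid (blocks l1 l2) hs"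
  by (simp add: Hset_def in_listset valid_def)



lemma bad_group:
  assumes val: "valid bs hs" and i: "i < length bs" and bi: "bs!i = (v,m,b)"
    and p1: "offs bs i < p" and p2: "p \<le> offs bs i + v*m"
  shows "(\<exists>u. (emb bs hs ^^ u) (int p) = - int p) \<longleftrightarrow> databad v (hs!i) ((p - offs bs i - 1) div v)"
proof -
  obtain s a \<sigma> where hi: "hs!i = (s,a,\<sigma>)" by (cases "hs!i") auto
  have len: "length hs = length bs" using val by (simp add: valid_def)
  have B: "(s,a,\<sigma>) \<in> Bset v m" using val i bi hi by (auto simp: valid_def)
  have vpos: "v > 0" using p1 p2 by (cases v) auto
  define t where "t = p - offs bs i - 1"
  have tlt: "t < v*m" using p1 p2 by (simp add: t_def)
  have j: "t div v < m" using tlt vpos by (simp add: div_less_iff_less_mult mult.commute)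
  have q: "t mod v < v" using vpos by simp
  have p: "p = offs bs i + 1 + (t div v)*v + t mod v" using p1 by (simp add: t_def)
  have X: "(\<exists>u. (emb bs hs ^^ u) (int (offs bs i + 1 + (t div v)*v + t mod v)) = - int (offs bs i + 1 + (t div v)*v + t mod v))
      \<longleftrightarrow> databad v (s,a,\<sigma>) (t div v)"
    by (rule bad_char[where g="emb bs hs", OF emb_odd _ Bset_facts(1)[OF B] Bset_facts(2)[OF B] j q])
       (rule emb_step[OF len i bi hi], assumption+)
  show ?thesis unfolding hi t_def[symmetric] using X p by simp
qed

lemma chi_same:
  assumes val: "valid bs hs" and val': "valid bs hs'"
    and db: "\<And>i v m b j. i < length bs \<Longrightarrow> bs!i = (v,m,b) \<Longrightarrow> j < m \<Longrightarrow>
              databad v (hs!i) j \<longleftrightarrow> databad v (hs'!i) j"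
  shows "chi n (emb bs hs) = chi n (emb bs hs')"
proof -
  have pt: "(\<exists>u. (emb bs hs ^^ u) (int p) = - int p) \<longleftrightarrow> (\<exists>u. (emb bs hs' ^^ u) (int p) = - int p)"
    if p0: "p > 0" for p
  proof (cases "p \<le> sum_list (map wt bs)")
    case True
    then obtain i where i: "i < length bs" "offs bs i < p" "p \<le> offs bs i + wt (bs!i)"
      using cover[of 0 p bs] p0 by auto
    obtain v m b where bi: "bs!i = (v,m,b)" by (cases "bs!i") auto
    have p2: "p \<le> offs bs i + v*m" using i(3) bi by (simp add: wt_def)
    have vpos: "v > 0" using i(2) p2 by (cases v) auto
    have j: "(p - offs bs i - 1) div v < m"
    proof -
      have "p - offs bs i - 1 < v*m" using i(2) p2 by simp
      then show ?thesis using vpos by (simp add: div_less_iff_less_mult mult.commute)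
    qed
    show ?thesis using bad_group[OF val i(1) bi i(2) p2] bad_group[OF val' i(1) bi i(2) p2]
        db[OF i(1) bi j] by simp
  next
    case False
    have fx: "\<And>hs. (emb bs hs ^^ u) (int p) = int p" for u
    proof -
      fix hs
      have e: "emb bs hs (int p) = int p" using emb_pos_beyond[of 0 bs p hs] False p0 by (simp add: emb_def)
      show "(emb bs hs ^^ u) (int p) = int p" by (induction u) (simp_all add: e)
    qed
    show ?thesis using fx p0 by simp
  qed
  show ?thesis unfolding chi_def
  proof (intro iffI ballI allI)
    fix i k assume h: "\<forall>i\<in>{1..int n}. \<forall>k. (emb bs hs ^^ k) i \<noteq> - i" and ii: "i \<in> {1..int n}"
    have "0 < i" using ii by simp
    then obtain p where ip: "i = int p" "p > 0" by (rule pos_int_cases)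
    show "(emb bs hs' ^^ k) i \<noteq> - i"
    proof
      assume "(emb bs hs' ^^ k) i = - i"
      then have "\<exists>u. (emb bs hs' ^^ u) (int p) = - int p" using ip(1) by blast
      then obtain u where "(emb bs hs ^^ u) (int p) = - int p" using pt[OF ip(2)] by blast
      then show False using h ii ip(1) by blast
    qed
  next
    fix i k assume h: "\<forall>i\<in>{1..int n}. \<forall>k. (emb bs hs' ^^ k) i \<noteq> - i" and ii: "i \<in> {1..int n}"
    have "0 < i" using ii by simp
    then obtain p where ip: "i = int p" "p > 0" by (rule pos_int_cases)
    show "(emb bs hs ^^ k) i \<noteq> - i"
    proof
      assume "(emb bs hs ^^ k) i = - i"
      then have "\<exists>u. (emb bs hs ^^ u) (int p) = - int p" using ip(1) by blast
      then obtain u where "(emb bs hs' ^^ u) (int p) = - int p" using pt[OF ip(2)] by blast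
      then show False using h ii ip(1) by blast
    qed
  qed
qed



lemma nat_abs_sign: "S \<in> {-1,1::int} \<Longrightarrow> nat \<bar>S * int P\<bar> = P"
  by auto

lemma slot_bound: "j < m \<Longrightarrow> r < (v::nat) \<Longrightarrow> j*v + r < v*m"
proof -
  assume a: "j < m" "r < v"
  have "j*v+r < j*v + v" using a by simp
  also have "\<dots> = (j+1)*v" by simp
  also have "\<dots> \<le> m*v" using a by (intro mult_right_mono) auto
  finally show ?thesis by (simp add: mult.commute)
qed

lemma up_val:
  assumes val: "valid bs hs" and i: "i < length bs" and bi: "bs!i = (v,m,b)" and hi: "hs!i = (s,a,\<sigma>)"
    and p1: "offs bs i < p" and p2: "p \<le> offs bs i + v*m" and pn: "p \<le> n"
  shows "underlying_perm n (emb bs hs) p =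
     offs bs i + 1 + \<sigma> ((p - offs bs i - 1) div v) * v + ((p - offs bs i - 1) mod v + a ((p - offs bs i - 1) div v)) mod v"
   and "offs bs i < underlying_perm n (emb bs hs) p" "underlying_perm n (emb bs hs) p \<le> offs bs i + v*m"
proof -
  have len: "length hs = length bs" using val by (simp add: valid_def)
  have B: "(s,a,\<sigma>) \<in> Bset v m" using val i bi hi by (auto simp: valid_def)
  have vpos: "v > 0" using p1 p2 by (cases v) auto
  define t where "t = p - offs bs i - 1"
  define j where "j = t div v"
  define q where "q = t mod v"
  have tlt: "t < v*m" using p1 p2 by (simp add: t_def)
  have j: "j < m" using tlt vpos by (simp add: j_def div_less_iff_less_mult mult.commute)
  have q: "q < v" using vpos by (simp add: q_def)
  have p: "p = offs bs i + 1 + j*v + q" using p1 by (simp add: t_def j_def q_def)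
  have e: "emb bs hs (int p) = s j * int (offs bs i + 1 + \<sigma> j * v + (q + a j) mod v)"
    unfolding p by (rule emb_step[OF len i bi hi j q])
  have p0: "1 \<le> p" using p1 by simp
  have "underlying_perm n (emb bs hs) p = nat \<bar>emb bs hs (int p)\<bar>"
    using p0 pn by (simp add: underlying_perm_def)
  also have "\<dots> = nat \<bar>s j * int (offs bs i + 1 + \<sigma> j * v + (q + a j) mod v)\<bar>" by (simp only: e)
  also have "\<dots> = offs bs i + 1 + \<sigma> j * v + (q + a j) mod v" by (rule nat_abs_sign[OF Bset_facts(2)[OF B j]])
  finally have U: "underlying_perm n (emb bs hs) p = offs bs i + 1 + \<sigma> j * v + (q + a j) mod v" .
  then show "underlying_perm n (emb bs hs) p =
     offs bs i + 1 + \<sigma> ((p - offs bs i - 1) div v) * v + ((p - offs bs i - 1) mod v + a ((p - offs bs i - 1) div v)) mod v"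
    by (simp add: t_def j_def q_def)
  show "offs bs i < underlying_perm n (emb bs hs) p" using U by simp
  have "\<sigma> j < m" using permutes_in_image[OF Bset_facts(1)[OF B], of j] j by simp
  then have "\<sigma> j * v + (q + a j) mod v < v*m" using vpos by (intro slot_bound) auto
  then show "underlying_perm n (emb bs hs) p \<le> offs bs i + v*m" using U by simp
qed

lemma mod_cancel_nat: "(q + A) mod v = (q' + A) mod v \<Longrightarrow> q < v \<Longrightarrow> q' < (v::nat) \<Longrightarrow> q = q'"
proof -
  assume a: "(q + A) mod v = (q' + A) mod v" "q < v" "q' < v"
  have "int ((q + A) mod v) = int ((q' + A) mod v)" using a by simp
  then have "(int q + int A) mod int v = (int q' + int A) mod int v" by (simp add: zmod_int)
  moreover have "int q mod int v = ((int q + int A) mod int v - int A) mod int v" by (simp add: mod_diff_left_eq)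
  moreover have "int q' mod int v = ((int q' + int A) mod int v - int A) mod int v" by (simp add: mod_diff_left_eq)
  ultimately have "int q mod int v = int q' mod int v" by simp
  then show "q = q'" using a by (simp add: zmod_int)
qed

lemma up_perm:
  assumes val: "valid bs hs" and tot: "sum_list (map wt bs) = n"
  shows "underlying_perm n (emb bs hs) permutes {1..n}"
proof -
  let ?f = "underlying_perm n (emb bs hs)"
  have grp: "\<exists>i<length bs. offs bs i < p \<and> p \<le> offs bs i + wt (bs!i)" if "p \<in> {1..n}" for p
    using cover[of 0 p bs] that tot by auto
  have img: "?f p \<in> {1..n}" if p: "p \<in> {1..n}" for p
  proof -
    obtain i where i: "i < length bs" "offs bs i < p" "p \<le> offs bs i + wt (bs!i)" using grp[OF p] by auto
    obtain v m b where bi: "bs!i = (v,m,b)" by (cases "bs!i") auto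
    obtain s a \<sigma> where hi: "hs!i = (s,a,\<sigma>)" by (cases "hs!i") auto
    have p2: "p \<le> offs bs i + v*m" using i bi by (simp add: wt_def)
    have pn: "p \<le> n" using p by simp
    note U = up_val[OF val i(1) bi hi i(2) p2 pn]
    have "offs bs i + v*m \<le> n" using offs_total[OF i(1)] tot bi by (simp add: wt_def)
    then show ?thesis using U(2,3) p by auto
  qed
  have inj: "inj_on ?f {1..n}"
  proof (rule inj_onI)
    fix p p' assume p: "p \<in> {1..n}" and p': "p' \<in> {1..n}" and eq: "?f p = ?f p'"
    obtain i where i: "i < length bs" "offs bs i < p" "p \<le> offs bs i + wt (bs!i)" using grp[OF p] by auto
    obtain i' where i': "i' < length bs" "offs bs i' < p'" "p' \<le> offs bs i' + wt (bs!i')" using grp[OF p'] by auto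
    obtain v m b where bi: "bs!i = (v,m,b)" by (cases "bs!i") auto
    obtain v' m' b' where bi': "bs!i' = (v',m',b')" by (cases "bs!i'") auto
    obtain s a \<sigma> where hi: "hs!i = (s,a,\<sigma>)" by (cases "hs!i") auto
    obtain s' a' \<sigma>' where hi': "hs!i' = (s',a',\<sigma>')" by (cases "hs!i'") auto
    have p2: "p \<le> offs bs i + v*m" using i bi by (simp add: wt_def)
    have p2': "p' \<le> offs bs i' + v'*m'" using i' bi' by (simp add: wt_def)
    have pn: "p \<le> n" "p' \<le> n" using p p' by simp_all
    note U = up_val[OF val i(1) bi hi i(2) p2 pn(1)] and U' = up_val[OF val i'(1) bi' hi' i'(2) p2' pn(2)]
    have "i = i'"
      by (rule group_unique[OF i(1) i'(1), of "?f p"]) (use U(2,3) U'(2,3) eq bi bi' in \<open>auto simp: wt_def\<close>)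
    then have ii: "i' = i" "v' = v" "m' = m" "s' = s" "a' = a" "\<sigma>' = \<sigma>" using bi bi' hi hi' by auto
    have B: "(s,a,\<sigma>) \<in> Bset v m" using val i bi hi by (auto simp: valid_def)
    have vpos: "v > 0" using i(2) p2 by (cases v) auto
    define t where "t = p - offs bs i - 1"
    define t' where "t' = p' - offs bs i - 1"
    have tlt: "t < v*m" "t' < v*m" using i(2) p2 i'(2) p2' ii by (auto simp: t_def t'_def)
    have j: "t div v < m" "t' div v < m" using tlt vpos by (auto simp: div_less_iff_less_mult mult.commute)
    have E: "\<sigma> (t div v) * v + (t mod v + a (t div v)) mod v = \<sigma> (t' div v) * v + (t' mod v + a (t' div v)) mod v"
      using U(1) U'(1) eq ii by (simp add: t_def t'_def)
    have r: "(t mod v + a (t div v)) mod v < v" "(t' mod v + a (t' div v)) mod v < v" using vpos by auto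
    have "(\<sigma> (t div v) * v + (t mod v + a (t div v)) mod v) div v = (\<sigma> (t' div v) * v + (t' mod v + a (t' div v)) mod v) div v"
      "(\<sigma> (t div v) * v + (t mod v + a (t div v)) mod v) mod v = (\<sigma> (t' div v) * v + (t' mod v + a (t' div v)) mod v) mod v"
      using E by simp_all
    then have s1: "\<sigma> (t div v) = \<sigma> (t' div v)" and s2: "(t mod v + a (t div v)) mod v = (t' mod v + a (t' div v)) mod v"
      using vpos r by simp_all
    have jj: "t div v = t' div v" using s1 permutes_inj[OF Bset_facts(1)[OF B]] by (simp add: inj_eq)
    then have "t mod v = t' mod v" using s2 mod_cancel_nat[of "t mod v" "a (t div v)" v "t' mod v"] vpos by simp
    then have "t = t'" using jj by (metis div_mult_mod_eq)
    then show "p = p'" using i(2) i'(2) ii by (simp add: t_def t'_def)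
  qed
  have "?f ` {1..n} \<subseteq> {1..n}" using img by blast
  then have "?f ` {1..n} = {1..n}" using endo_inj_surj[of "{1..n}" ?f] inj by blast
  then have "bij_betw ?f {1..n} {1..n}" using inj by (simp add: bij_betw_def)
  moreover have "\<And>x. x \<notin> {1..n} \<Longrightarrow> ?f x = x" by (auto simp: underlying_perm_def)
  ultimately show ?thesis by (rule bij_imp_permutes)
qed



definition modh :: "nat \<Rightarrow> nat \<Rightarrow> belt \<Rightarrow> belt" where
  "modh v c h = (case h of (s,a,\<sigma>) \<Rightarrow> (s, a(0 := (a 0 + c) mod v), \<sigma>))"

definition rot :: "nat \<Rightarrow> nat \<Rightarrow> nat \<Rightarrow> nat \<Rightarrow> nat" where
  "rot off v d x = (if off < x \<and> x \<le> off + v then off + 1 + ((x - off - 1 + d) mod v) else x)"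

lemma rot_in: "off < x \<Longrightarrow> x \<le> off + v \<Longrightarrow> off < rot off v d x \<and> rot off v d x \<le> off + v"
  by (auto simp: rot_def Suc_le_eq)

lemma rot_rot: "rot off v d (rot off v d x) = rot off v (2*d) x"
proof (cases "off < x \<and> x \<le> off + v")
  case True
  have vpos: "v > 0" using True by auto
  define y where "y = rot off v d x"
  have y: "y = off + 1 + ((x - off - 1 + d) mod v)" using True by (simp add: rot_def y_def)
  have yr: "off < y \<and> y \<le> off + v" using rot_in[of off x v d] True by (simp add: y_def)
  have "rot off v d y = off + 1 + ((y - off - 1 + d) mod v)" using yr by (simp add: rot_def)
  also have "y - off - 1 = (x - off - 1 + d) mod v" using y by simp
  also have "((x - off - 1 + d) mod v + d) mod v = (x - off - 1 + 2*d) mod v" by (simp add: mod_add_left_eq add.assoc mult_2)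
  also have "off + 1 + ((x - off - 1 + 2*d) mod v) = rot off v (2*d) x" using True by (simp add: rot_def)
  finally show ?thesis by (simp add: y_def)
next
  case False
  then have "rot off v d x = x" "rot off v (2*d) x = x" by (auto simp: rot_def)
  then show ?thesis by simp
qed

lemma rot_permutes: "rot off v d permutes {off+1..off+v}"
proof -
  let ?f = "rot off v d"
  have img: "?f ` {off+1..off+v} \<subseteq> {off+1..off+v}"
  proof (rule image_subsetI)
    fix x assume "x \<in> {off+1..off+v}"
    then show "?f x \<in> {off+1..off+v}" using rot_in[of off x v d] by auto
  qed
  have inj: "inj_on ?f {off+1..off+v}"
  proof (rule inj_onI)
    fix x y assume x: "x \<in> {off+1..off+v}" and y: "y \<in> {off+1..off+v}" and e: "?f x = ?f y"
    have x1: "off < x" "x \<le> off + v" and y1: "off < y" "y \<le> off + v" using x y by auto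
    have "?f x = off + 1 + ((x - off - 1 + d) mod v)" using x1 unfolding rot_def by (simp only: if_True conj_absorb simp_thms)
    moreover have "?f y = off + 1 + ((y - off - 1 + d) mod v)" using y1 unfolding rot_def by (simp only: if_True conj_absorb simp_thms)
    ultimately have "(x - off - 1 + d) mod v = (y - off - 1 + d) mod v" using e by linarith
    moreover have "x - off - 1 < v" "y - off - 1 < v" using x1 y1 by linarith+
    ultimately have "x - off - 1 = y - off - 1" by (rule mod_cancel_nat)
    then show "x = y" using x1 y1 by linarith
  qed
  have "?f ` {off+1..off+v} = {off+1..off+v}" using endo_inj_surj[of "{off+1..off+v}" ?f] img inj by blast
  then have "bij_betw ?f {off+1..off+v} {off+1..off+v}" using inj by (simp add: bij_betw_def)
  moreover have "\<And>x. x \<notin> {off+1..off+v} \<Longrightarrow> ?f x = x" by (auto simp: rot_def)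
  ultimately show ?thesis by (rule bij_imp_permutes)
qed

lemma rot_permutation: "permutation (rot off v d)"
  using rot_permutes by (auto simp: permutation_permutes)

lemma valid_mod:
  assumes val: "valid bs hs" and i0: "i0 < length bs" and bi: "bs!i0 = (v,m,b)" and m: "0 < m"
  shows "valid bs (hs[i0 := modh v c (hs!i0)])"
proof -
  obtain s a \<sigma> where hi: "hs!i0 = (s,a,\<sigma>)" by (cases "hs!i0") auto
  have B: "(s,a,\<sigma>) \<in> Bset v m" using val i0 bi hi by (auto simp: valid_def)
  have vpos: "v > 0" using Bset_facts(3)[OF B m] by simp
  have "(s, a(0 := (a 0 + c) mod v), \<sigma>) \<in> Bset v m"
    unfolding Bset_def
  proof (intro CollectI, simp only: case_prod_conv, intro conjI allI impI)
    show "\<sigma> permutes {..<m}" using Bset_facts(1)[OF B] .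
    fix i
    show "i < m \<Longrightarrow> s i \<in> {-1,1}" using Bset_facts(2)[OF B] by blast
    show "m \<le> i \<Longrightarrow> s i = 1" using Bset_facts(4)[OF B] by blast
    show "i < m \<Longrightarrow> (a(0 := (a 0 + c) mod v)) i < v" using Bset_facts(3)[OF B] vpos by simp
    show "m \<le> i \<Longrightarrow> (a(0 := (a 0 + c) mod v)) i = 0" using Bset_facts(5)[OF B] m by simp
  qed
  then have "modh v c (hs!i0) \<in> Bset v m" using hi by (simp add: modh_def)
  then show ?thesis using val i0 bi unfolding valid_def by (simp add: nth_list_update)
qed



lemma emb_mod:
  assumes val: "valid bs hs" and i0: "i0 < length bs" and bi: "bs!i0 = (v,m,b)" and m: "0 < m"
    and p0: "0 < p"
  shows "emb bs (hs[i0 := modh v c (hs!i0)]) (int p) = emb bs hs (int (rot (offs bs i0) v c p))"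
proof -
  let ?hs' = "hs[i0 := modh v c (hs!i0)]"
  let ?O = "offs bs i0"
  obtain s a \<sigma> where hi: "hs!i0 = (s,a,\<sigma>)" by (cases "hs!i0") auto
  have B: "(s,a,\<sigma>) \<in> Bset v m" using val i0 bi hi by (auto simp: valid_def)
  have vpos: "v > 0" using Bset_facts(3)[OF B m] by simp
  have len: "length hs = length bs" using val by (simp add: valid_def)
  have len': "length ?hs' = length bs" using len by simp
  have vm: "v \<le> v*m" using m by simp
  have tot0: "?O + v*m \<le> sum_list (map wt bs)" using offs_total[OF i0] bi by (simp add: wt_def)
  have ep: "\<And>x hs. 0 < x \<Longrightarrow> emb bs hs (int x) = emb_pos bs hs 0 x" by (simp add: emb_def)
  show ?thesis
  proof (cases "p \<le> sum_list (map wt bs)")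
    case True
    then obtain i where i: "i < length bs" "offs bs i < p" "p \<le> offs bs i + wt (bs!i)"
      using cover[of 0 p bs] p0 by auto
    obtain v' m' b' where bi': "bs!i = (v',m',b')" by (cases "bs!i") auto
    have p2: "p \<le> offs bs i + v'*m'" using i(3) bi' by (simp add: wt_def)
    show ?thesis
    proof (cases "i = i0")
      case False
      have nr: "\<not> (?O < p \<and> p \<le> ?O + v)"
      proof
        assume h: "?O < p \<and> p \<le> ?O + v"
        have "p \<le> ?O + v*m" using h vm by linarith
        then have pp: "p \<le> ?O + wt (bs!i0)" using bi by (simp add: wt_def)
        have "i = i0" using group_unique[OF i(1) i0 i(2,3)] h pp by blast
        then show False using False by simp
      qed
      then have r: "rot ?O v c p = p" unfolding rot_def by (simp only: if_False)
      have "emb bs ?hs' (int p) = act_block v' (?hs'!i) (offs bs i) (p - offs bs i - 1)"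
        using ep[OF p0] emb_pos_at[OF len' i(1) bi', of 0 p] i(2) p2 by simp
      also have "\<dots> = act_block v' (hs!i) (offs bs i) (p - offs bs i - 1)" using False by simp
      also have "\<dots> = emb bs hs (int p)"
        using ep[OF p0] emb_pos_at[OF len i(1) bi', of 0 p] i(2) p2 by simp
      finally show ?thesis using r by simp
    next
      case True
      then have ii: "v' = v" "m' = m" using bi bi' by auto
      define t where "t = p - ?O - 1"
      have pt: "p = ?O + 1 + t" using i(2) True by (simp add: t_def)
      have "emb bs ?hs' (int p) = act_block v (modh v c (hs!i0)) ?O t"
        using ep[OF p0] emb_pos_at[OF len' i(1) bi', of 0 p] i(2) p2 True ii i0 len by (simp add: t_def)
      also have "\<dots> = s (t div v) * int (?O + \<sigma> (t div v) * v + (t mod v + (if t div v = 0 then (a 0 + c) mod v else a (t div v))) mod v + 1)"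
        using hi by (simp add: act_block_def modh_def)
      finally have L: "emb bs ?hs' (int p) = \<dots>" .
      show ?thesis
      proof (cases "t < v")
        case True
        have r: "rot ?O v c p = ?O + 1 + (t + c) mod v" using pt True by (simp add: rot_def)
        define t2 where "t2 = (t + c) mod v"
        have t2: "t2 < v" using vpos by (simp add: t2_def)
        have "emb bs hs (int (rot ?O v c p)) = act_block v (hs!i0) ?O t2"
        proof -
          have t3: "Suc t2 \<le> v*m" using t2 vm by linarith
          show ?thesis using ep[of "rot ?O v c p"] emb_pos_at[OF len i0 bi, of 0 "rot ?O v c p"] r t3
            by (simp add: t2_def)
        qed
        also have "\<dots> = s 0 * int (?O + \<sigma> 0 * v + (t2 + a 0) mod v + 1)"
          using hi t2 by (simp add: act_block_def)
        also have "(t2 + a 0) mod v = (t + (a 0 + c) mod v) mod v"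
          by (simp add: t2_def mod_add_left_eq mod_add_right_eq add.commute add.left_commute)
        finally show ?thesis using L True by simp
      next
        case False
        have r: "rot ?O v c p = p" using pt False by (simp add: rot_def)
        have nz: "t div v \<noteq> 0" using False vpos by (simp add: div_eq_0_iff)
        have "emb bs hs (int p) = act_block v (hs!i0) ?O t"
          using ep[OF p0] emb_pos_at[OF len i0 bi, of 0 p] i(2) p2 True ii by (simp add: t_def)
        also have "\<dots> = s (t div v) * int (?O + \<sigma> (t div v) * v + (t mod v + a (t div v)) mod v + 1)"
          using hi by (simp add: act_block_def)
        finally show ?thesis using L nz r by simp
      qed
    qed
  next
    case False
    have "\<not> (?O < p \<and> p \<le> ?O + v)" using False tot0 vm by linarith
    then have r: "rot ?O v c p = p" unfolding rot_def by (simp only: if_False)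
    have "emb bs ?hs' (int p) = int p" using ep[OF p0] emb_pos_beyond[of 0 bs p] False by simp
    moreover have "emb bs hs (int p) = int p" using ep[OF p0] emb_pos_beyond[of 0 bs p] False by simp
    ultimately show ?thesis using r by simp
  qed
qed



lemma eps_same:
  assumes val: "valid bs hs" and i0: "i0 < length bs" and bi: "bs!i0 = (v,m,b)" and m: "0 < m"
    and tot: "sum_list (map wt bs) = n"
  shows "eps_n n (emb bs (hs[i0 := modh v (2*d) (hs!i0)])) = eps_n n (emb bs hs)"
proof -
  let ?hs' = "hs[i0 := modh v (2*d) (hs!i0)]"
  let ?O = "offs bs i0"
  let ?R = "rot ?O v d"
  have val': "valid bs ?hs'" by (rule valid_mod[OF val i0 bi m])
  have rng: "?O + v \<le> n"
  proof -
    have "v \<le> v*m" using m by simp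
    moreover have "?O + v*m \<le> n" using offs_total[OF i0] bi tot by (simp add: wt_def)
    ultimately show ?thesis by linarith
  qed
  have rr: "\<And>x. ?R (?R x) = rot ?O v (2*d) x" by (rule rot_rot)
  have eq: "underlying_perm n (emb bs ?hs') = underlying_perm n (emb bs hs) \<circ> ?R \<circ> ?R"
  proof
    fix x
    show "underlying_perm n (emb bs ?hs') x = (underlying_perm n (emb bs hs) \<circ> ?R \<circ> ?R) x"
    proof (cases "1 \<le> x \<and> x \<le> n")
      case True
      have rx: "1 \<le> rot ?O v (2*d) x \<and> rot ?O v (2*d) x \<le> n"
      proof (cases "?O < x \<and> x \<le> ?O + v")
        case True then show ?thesis using rot_in[of ?O x v "2*d"] rng by linarith
      next
        case False
        then have "rot ?O v (2*d) x = x" unfolding rot_def by (simp only: if_False)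
        then show ?thesis using \<open>1 \<le> x \<and> x \<le> n\<close> by simp
      qed
      have "underlying_perm n (emb bs ?hs') x = nat \<bar>emb bs ?hs' (int x)\<bar>"
        using True by (simp add: underlying_perm_def)
      also have "\<dots> = nat \<bar>emb bs hs (int (rot ?O v (2*d) x))\<bar>"
        using emb_mod[OF val i0 bi m, of x "2*d"] True by simp
      also have "\<dots> = underlying_perm n (emb bs hs) (rot ?O v (2*d) x)"
        using rx by (simp add: underlying_perm_def)
      finally show ?thesis using rr by simp
    next
      case False
      have "\<not> (?O < x \<and> x \<le> ?O + v)" using False rng by linarith
      then have "rot ?O v (2*d) x = x" unfolding rot_def by (simp only: if_False)
      then show ?thesis using False rr by (auto simp: underlying_perm_def)
    qed
  qed
  have P: "permutation (underlying_perm n (emb bs hs))"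
    using up_perm[OF val tot] by (auto simp: permutation_permutes)
  have "sign (underlying_perm n (emb bs ?hs')) = sign (underlying_perm n (emb bs hs)) * sign ?R * sign ?R"
    unfolding eq using P rot_permutation
    by (simp add: sign_compose permutation_compose)
  moreover have "sign ?R * sign ?R = (1::int)" by (cases ?R rule: sign_cases) simp_all
  ultimately show ?thesis unfolding eps_n_def by (simp add: mult.assoc)
qed

lemma mod_diff_dvd: "int v dvd (int ((x + c) mod v) - int x - int c)"
proof -
  have "int ((x + c) mod v) = (int x + int c) mod int v" by (simp add: zmod_int)
  then show ?thesis by (metis add_diff_cancel_left' diff_diff_eq dvd_minus_iff minus_diff_eq minus_mod_eq_mult_div dvd_triv_left)
qed

lemma databad_mod:
  assumes B: "h \<in> Bset v m" and m: "0 < m" and ob: "odd b" and vb: "v = d * b"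
  shows "databad v (modh v (2*d) h) j \<longleftrightarrow> databad v h j"
proof -
  obtain s a \<sigma> where h: "h = (s,a,\<sigma>)" by (cases h) auto
  define a' where "a' = a(0 := (a 0 + 2*d) mod v)"
  have mh: "modh v (2*d) h = (s,a',\<sigma>)" by (simp add: h modh_def a'_def)
  have vc: "int v dvd int b * int (2*d)" "int v dvd int b * (- int (2*d))" using vb by (simp_all add: ac_simps)
  have d1: "int v dvd (int (a' i) - int (a i) - (if i = 0 then int (2*d) else 0))" for i
    using mod_diff_dvd[of v "a 0" "2*d"] by (simp add: a'_def)
  have d2: "int v dvd (int (a i) - int (a' i) - (if i = 0 then - int (2*d) else 0))" for i
  proof -
    have "int (a i) - int (a' i) - (if i = 0 then - int (2*d) else 0) = - (int (a' i) - int (a i) - (if i = 0 then int (2*d) else 0))"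
      by simp
    then show ?thesis using d1[of i] by (simp only: dvd_minus_iff)
  qed
  show ?thesis unfolding mh unfolding h
    using transfer[OF ob vc(1) d1, of s \<sigma> j] transfer[OF ob vc(2) d2, of s \<sigma> j] by blast
qed



lemma chi_mod:
  assumes val: "valid bs hs" and i0: "i0 < length bs" and bi: "bs!i0 = (v,m,b)" and m: "0 < m"
    and ob: "odd q" and vq: "v = d * q"
  shows "chi n (emb bs (hs[i0 := modh v (2*d) (hs!i0)])) = chi n (emb bs hs)"
proof (rule chi_same[OF valid_mod[OF val i0 bi m] val])
  fix i v' m' b' j assume i: "i < length bs" and bi': "bs!i = (v',m',b')" and j: "j < m'"
  have len: "length hs = length bs" using val by (simp add: valid_def)
  show "databad v' (hs[i0 := modh v (2*d) (hs!i0)] ! i) j \<longleftrightarrow> databad v' (hs!i) j"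
  proof (cases "i = i0")
    case True
    then have ii: "v' = v" "m' = m" using bi bi' by auto
    have B: "hs!i0 \<in> Bset v m" using val i0 bi by (auto simp: valid_def)
    show ?thesis using True ii databad_mod[OF B m ob vq] len i0 by simp
  next
    case False then show ?thesis by simp
  qed
qed

lemma prod_list_update: "i < length xs \<Longrightarrow> prod_list (xs[i := y]) * xs!i = prod_list xs * (y::'a::comm_monoid_mult)"
proof (induction xs arbitrary: i)
  case Nil then show ?case by simp
next
  case (Cons x xs)
  show ?case
  proof (cases i)
    case 0 then show ?thesis by (simp add: ac_simps)
  next
    case (Suc i')
    then show ?thesis using Cons by (simp add: ac_simps)
  qed
qed

lemma omega_pow_v: "0 < v \<Longrightarrow> cis (2 * pi / real v) ^ v = 1"
  by (simp add: DeMoivre)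

lemma omega_pow_mod: "0 < v \<Longrightarrow> cis (2 * pi / real v) ^ (k mod v) = cis (2 * pi / real v) ^ k"
proof -
  assume v: "0 < v"
  have "cis (2 * pi / real v) ^ k = cis (2 * pi / real v) ^ (v * (k div v) + k mod v)" by simp
  also have "\<dots> = (cis (2 * pi / real v) ^ v) ^ (k div v) * cis (2 * pi / real v) ^ (k mod v)"
    by (simp only: power_add power_mult)
  finally show ?thesis using omega_pow_v[OF v] by simp
qed

lemma omega_ne1:
  assumes v: "0 < v" and nd: "\<not> v dvd c"
  shows "cis (2 * pi / real v) ^ c \<noteq> 1"
proof -
  let ?f = "\<lambda>k. cis (2 * pi * real k / real v)"
  have inj: "inj_on ?f {..<v}" using bij_betw_roots_unity[OF v] by (simp add: bij_betw_def)
  have r: "c mod v \<in> {..<v}" "0 \<in> {..<v}" using v by auto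
  have ne: "c mod v \<noteq> 0" using nd by (simp add: dvd_eq_mod_eq_0)
  have "?f (c mod v) \<noteq> ?f 0" using inj_on_eq_iff[OF inj r] ne by simp
  moreover have "cis (2 * pi / real v) ^ c = ?f (c mod v)"
    using omega_pow_mod[OF v, of c] by (simp add: DeMoivre mult.commute)
  ultimately show ?thesis by simp
qed

definition psiF :: "(nat \<times> nat \<times> bool) \<times> belt \<Rightarrow> complex" where
  "psiF = (\<lambda>((v, m, b), (s, a, \<sigma>)). cis (2 * pi / real v) ^ (\<Sum>i<m. a i))"

definition epsF :: "(nat \<times> nat \<times> bool) \<times> belt \<Rightarrow> int" where
  "epsF = (\<lambda>((v, m, b), (s, a, \<sigma>)). if b then sign \<sigma> else 1)"

lemma psi_alt: "psi bs hs = prod_list (map psiF (zip bs hs))"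
  by (simp add: psi_def psiF_def)

lemma epsH_alt: "epsH bs hs = prod_list (map epsF (zip bs hs))"
  by (simp add: epsH_def epsF_def)

lemma psiF_mod:
  assumes m: "0 < m" and v: "0 < v"
  shows "psiF ((v,m,b), modh v c h) = psiF ((v,m,b), h) * cis (2 * pi / real v) ^ c"
proof -
  obtain s a \<sigma> where h: "h = (s,a,\<sigma>)" by (cases h) auto
  let ?w = "cis (2 * pi / real v)"
  define a' where "a' = a(0 := (a 0 + c) mod v)"
  have S: "(\<Sum>i<m. a' i) + a 0 = (\<Sum>i<m. a i) + (a 0 + c) mod v"
  proof -
    have z: "0 \<in> {..<m}" using m by simp
    have "(\<Sum>i<m. a' i) = a' 0 + (\<Sum>i\<in>{..<m} - {0}. a' i)" by (rule sum.remove[OF _ z]) simp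
    moreover have "(\<Sum>i<m. a i) = a 0 + (\<Sum>i\<in>{..<m} - {0}. a i)" by (rule sum.remove[OF _ z]) simp
    moreover have "(\<Sum>i\<in>{..<m} - {0}. a' i) = (\<Sum>i\<in>{..<m} - {0}. a i)" by (rule sum.cong) (auto simp: a'_def)
    ultimately show ?thesis by (simp add: a'_def)
  qed
  have "?w ^ (\<Sum>i<m. a' i) * ?w ^ a 0 = ?w ^ ((\<Sum>i<m. a i) + (a 0 + c) mod v)"
    by (simp only: power_add[symmetric] S)
  also have "\<dots> = ?w ^ (\<Sum>i<m. a i) * ?w ^ (a 0 + c)" using omega_pow_mod[OF v] by (simp add: power_add)
  also have "\<dots> = (?w ^ (\<Sum>i<m. a i) * ?w ^ c) * ?w ^ a 0" by (simp add: power_add ac_simps)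
  finally have "?w ^ (\<Sum>i<m. a' i) = ?w ^ (\<Sum>i<m. a i) * ?w ^ c" by simp
  then show ?thesis by (simp add: psiF_def h modh_def a'_def)
qed

lemma psi_mod:
  assumes len: "length hs = length bs" and i0: "i0 < length bs" and bi: "bs!i0 = (v,m,b)"
    and m: "0 < m" and v: "0 < v"
  shows "psi bs (hs[i0 := modh v c (hs!i0)]) = psi bs hs * cis (2 * pi / real v) ^ c"
proof -
  let ?zs = "zip bs hs"
  have z: "zip bs (hs[i0 := modh v c (hs!i0)]) = ?zs[i0 := (bs!i0, modh v c (hs!i0))]"
    using zip_update[of bs i0 "bs!i0" hs "modh v c (hs!i0)"] by simp
  have zi: "?zs ! i0 = (bs!i0, hs!i0)" using len i0 by simp
  have il: "i0 < length (map psiF ?zs)" using len i0 by simp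
  have nz: "psiF (?zs!i0) \<noteq> 0" using zi bi by (simp add: psiF_def split: prod.splits)
  have "prod_list (map psiF (?zs[i0 := (bs!i0, modh v c (hs!i0))])) * psiF (?zs!i0)
      = prod_list (map psiF ?zs) * psiF (bs!i0, modh v c (hs!i0))"
    using prod_list_update[OF il, of "psiF (bs!i0, modh v c (hs!i0))"] il by (simp add: map_update)
  also have "psiF (bs!i0, modh v c (hs!i0)) = psiF (?zs!i0) * cis (2 * pi / real v) ^ c"
    using psiF_mod[OF m v, of b c "hs!i0"] bi zi by simp
  finally have "prod_list (map psiF (?zs[i0 := (bs!i0, modh v c (hs!i0))])) = prod_list (map psiF ?zs) * cis (2 * pi / real v) ^ c"
    using nz by (simp add: ac_simps)
  then show ?thesis by (simp add: psi_alt z)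
qed

lemma epsH_mod:
  assumes len: "length hs = length bs" and i0: "i0 < length bs"
  shows "epsH bs (hs[i0 := modh v c (hs!i0)]) = epsH bs hs"
proof -
  let ?zs = "zip bs hs"
  have z: "zip bs (hs[i0 := modh v c (hs!i0)]) = ?zs[i0 := (bs!i0, modh v c (hs!i0))]"
    using zip_update[of bs i0 "bs!i0" hs "modh v c (hs!i0)"] by simp
  have zi: "?zs ! i0 = (bs!i0, hs!i0)" using len i0 by simp
  have e: "epsF (bs!i0, modh v c (hs!i0)) = epsF (?zs!i0)"
    using zi by (simp add: epsF_def modh_def split: prod.splits)
  have "map epsF (?zs[i0 := (bs!i0, modh v c (hs!i0))]) = (map epsF ?zs)[i0 := epsF (?zs!i0)]"
    by (simp add: map_update e)
  also have "\<dots> = map epsF ?zs" using len i0 by (metis list_update_id nth_map length_zip min.idem)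
  finally show ?thesis by (simp add: epsH_alt z)
qed



lemma odd_decomp:
  fixes v :: nat
  assumes "0 < v" "\<not> (\<exists>k. v = 2 ^ k)"
  shows "\<exists>e q. v = 2 ^ e * q \<and> odd q \<and> 1 < q"
  using assms
proof (induction v rule: less_induct)
  case (less v)
  show ?case
  proof (cases "even v")
    case True
    then obtain w where w: "v = 2 * w" by blast
    have w0: "0 < w" "w < v" using less.prems(1) w by auto
    have "\<not> (\<exists>k. w = 2 ^ k)"
    proof
      assume "\<exists>k. w = 2 ^ k"
      then obtain k where "w = 2 ^ k" by blast
      then have "v = 2 ^ Suc k" using w by simp
      then show False using less.prems(2) by blast
    qed
    then obtain e q where "w = 2 ^ e * q" "odd q" "1 < q" using less.IH[OF w0(2) w0(1)] by blast
    then show ?thesis using w by (intro exI[of _ "Suc e"] exI[of _ q]) simp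
  next
    case False
    have "v \<noteq> 1" using less.prems(2) by (metis power_0)
    then show ?thesis using False less.prems(1) by (intro exI[of _ 0] exI[of _ v]) simp
  qed
qed

lemma not_dvd_c:
  fixes v e q :: nat
  assumes "v = 2 ^ e * q" "odd q" "1 < q"
  shows "\<not> v dvd 2 * 2 ^ e"
proof
  assume "v dvd 2 * 2 ^ e"
  then have "2 ^ e * q dvd 2 ^ e * 2" using assms(1) by (simp add: mult.commute)
  then have "q dvd 2" by (simp add: nat_mult_dvd_cancel1)
  then have "q \<le> 2" by (simp add: dvd_imp_le)
  then show False using assms(2,3) by (cases "q = 2") auto
qed

lemma sum_mset_count:
  fixes l :: "nat multiset"
  assumes "finite A" "set_mset l \<subseteq> A"
  shows "sum_mset l = (\<Sum>y\<in>A. y * count l y)"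
  using assms(2)
proof (induction l)
  case empty then show ?case by simp
next
  case (add x M)
  have xA: "x \<in> A" using add.prems by simp
  have "(\<Sum>y\<in>A. y * count (add_mset x M) y) = (\<Sum>y\<in>A. y * count M y + (if y = x then x else 0))"
    by (rule sum.cong) auto
  also have "\<dots> = (\<Sum>y\<in>A. y * count M y) + x" using xA assms(1) by (simp add: sum.distrib)
  finally show ?case using add by simp
qed

lemma total_part:
  "sum_list (map wt (map (\<lambda>v. (v, count l v, b)) (sorted_list_of_set (set_mset l)))) = sum_mset l"
proof -
  have "sum_list (map wt (map (\<lambda>v. (v, count l v, b)) (sorted_list_of_set (set_mset l))))
     = sum_list (map (\<lambda>v. v * count l v) (sorted_list_of_set (set_mset l)))"
    by (simp add: wt_def comp_def)
  also have "\<dots> = (\<Sum>v\<in>set_mset l. v * count l v)"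
    by (simp add: sum_list_distinct_conv_sum_set)
  also have "\<dots> = sum_mset l" by (rule sum_mset_count[symmetric]) auto
  finally show ?thesis .
qed

lemma total_blocks: "sum_list (map wt (blocks l1 l2)) = sum_mset l1 + sum_mset l2"
  unfolding blocks_def using total_part[of l1 True] total_part[of l2 False] by simp

lemma find_block:
  assumes "v \<in># l1 \<or> v \<in># l2"
  shows "\<exists>i0 m b. i0 < length (blocks l1 l2) \<and> blocks l1 l2 ! i0 = (v, m, b) \<and> 0 < m"
proof -
  let ?L1 = "sorted_list_of_set (set_mset l1)"
  let ?L2 = "sorted_list_of_set (set_mset l2)"
  show ?thesis
  proof (cases "v \<in># l1")
    case True
    then have "v \<in> set ?L1" by simp
    then obtain i where i: "i < length ?L1" "?L1 ! i = v" by (metis in_set_conv_nth)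
    show ?thesis
      by (rule exI[of _ i], rule exI[of _ "count l1 v"], rule exI[of _ True])
         (use i True in \<open>simp add: blocks_def nth_append\<close>)
  next
    case False
    then have v2: "v \<in># l2" using assms by simp
    then have "v \<in> set ?L2" by simp
    then obtain i where i: "i < length ?L2" "?L2 ! i = v" by (metis in_set_conv_nth)
    show ?thesis
      by (rule exI[of _ "length ?L1 + i"], rule exI[of _ "count l2 v"], rule exI[of _ False])
         (use i v2 in \<open>simp add: blocks_def nth_append\<close>)
  qed
qed

lemma sum_zero:
  fixes F :: "'a \<Rightarrow> complex"
  assumes bij: "bij_betw T A A" and FT: "\<And>h. h \<in> A \<Longrightarrow> F (T h) = F h * z" and z: "z \<noteq> 1"
  shows "sum F A = 0"
proof -
  have "sum F A = sum (\<lambda>h. F (T h)) A" using sum.reindex_bij_betw[OF bij, of F] by simp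
  also have "\<dots> = sum (\<lambda>h. F h * z) A" using FT by (rule sum.cong[OF refl])
  also have "\<dots> = sum F A * z" by (simp add: sum_distrib_right)
  finally have "sum F A * (1 - z) = 0" by (simp add: algebra_simps)
  then show ?thesis using z by simp
qed

lemma modh_inv:
  assumes "h \<in> Bset v m" "0 < m" and that: "k1 + k2 = v * c"
  shows "modh v k2 (modh v k1 h) = h"
proof -
  obtain s a \<sigma> where h: "h = (s,a,\<sigma>)" by (cases h) auto
  have a0: "a 0 < v" using Bset_facts(3)[of s a \<sigma> v m 0] assms h by simp
  have "((a 0 + k1) mod v + k2) mod v = (a 0 + (k1 + k2)) mod v" by (simp add: mod_add_left_eq add.assoc)
  also have "\<dots> = a 0" using that a0 by simp
  finally show ?thesis by (simp add: h modh_def)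
qed



theorem proposition14:
  fixes n :: nat and l1 l2 :: "nat multiset"
  assumes "n \<ge> 1"
    and "is_partition l1" and "is_partition l2"
    and "sum_mset l1 + sum_mset l2 = n"
    and "inner_H n l1 l2 \<noteq> 0"
  shows "(\<forall>v\<in>#l1. \<exists>k::nat. v = 2 ^ k) \<and> (\<forall>v\<in>#l2. \<exists>k::nat. v = 2 ^ k)"
proof (rule ccontr)
  assume "\<not> ?thesis"
  then obtain v where vin: "v \<in># l1 \<or> v \<in># l2" and np: "\<not> (\<exists>k. v = 2 ^ k)" by blast
  have v0: "0 < v" using vin assms(2,3) by (auto simp: is_partition_def intro: Nat.gr0I)
  obtain i0 m b where i0: "i0 < length (blocks l1 l2)" and bi: "blocks l1 l2 ! i0 = (v, m, b)" and m: "0 < m"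
    using find_block[OF vin] by blast
  obtain e q where eq: "v = 2 ^ e * q" "odd q" "1 < q" using odd_decomp[OF v0 np] by blast
  define bs where "bs = blocks l1 l2"
  define d where "d = (2::nat) ^ e"
  define c where "c = 2 * d"
  define w where "w = cis (2 * pi / real v)"
  define T where "T = (\<lambda>h::belt list. h[i0 := modh v c (h!i0)])"
  define T' where "T' = (\<lambda>h::belt list. h[i0 := modh v ((v - 1) * c) (h!i0)])"
  have i0': "i0 < length bs" and bi': "bs ! i0 = (v, m, b)" using i0 bi by (simp_all add: bs_def)
  have tot: "sum_list (map wt bs) = n" using total_blocks assms(4) by (simp add: bs_def)
  have vq: "v = d * q" using eq by (simp add: d_def)
  have ndv: "\<not> v dvd c" using not_dvd_c[OF eq] by (simp add: c_def d_def)
  have wc: "w ^ c \<noteq> 1" unfolding w_def by (rule omega_ne1[OF v0 ndv])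
  have val: "valid bs h" if "h \<in> Hset l1 l2" for h using that by (simp add: Hset_valid bs_def)
  have valH: "h \<in> Hset l1 l2" if "valid bs h" for h using that by (simp add: Hset_valid bs_def)
  have len: "length h = length bs" if "h \<in> Hset l1 l2" for h using val[OF that] by (simp add: valid_def)
  have Bh: "h!i0 \<in> Bset v m" if "h \<in> Hset l1 l2" for h using val[OF that] i0' bi' by (auto simp: valid_def)
  have c1: "c + (v - 1) * c = v * c" "(v - 1) * c + c = v * c" using v0 by (simp_all add: algebra_simps)
  have TT: "T' (T h) = h" if "h \<in> Hset l1 l2" for h
  proof -
    have "T' (T h) = h[i0 := modh v ((v - 1) * c) (modh v c (h!i0))]"
      using len[OF that] i0' by (simp add: T_def T'_def)
    also have "modh v ((v - 1) * c) (modh v c (h!i0)) = h!i0" by (rule modh_inv[OF Bh[OF that] m c1(1)])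
    finally show ?thesis by simp
  qed
  have TT': "T (T' h) = h" if "h \<in> Hset l1 l2" for h
  proof -
    have "T (T' h) = h[i0 := modh v c (modh v ((v - 1) * c) (h!i0))]"
      using len[OF that] i0' by (simp add: T_def T'_def)
    also have "modh v c (modh v ((v - 1) * c) (h!i0)) = h!i0" by (rule modh_inv[OF Bh[OF that] m c1(2)])
    finally show ?thesis by simp
  qed
  have bij: "bij_betw T (Hset l1 l2) (Hset l1 l2)"
  proof (rule bij_betw_byWitness[where f' = T'])
    show "\<forall>h\<in>Hset l1 l2. T' (T h) = h" using TT by blast
    show "\<forall>h\<in>Hset l1 l2. T (T' h) = h" using TT' by blast
    show "T ` Hset l1 l2 \<subseteq> Hset l1 l2"
      using valid_mod[OF val i0' bi' m] valH unfolding T_def by blast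
    show "T' ` Hset l1 l2 \<subseteq> Hset l1 l2"
      using valid_mod[OF val i0' bi' m] valH unfolding T'_def by blast
  qed
  define F where "F = (\<lambda>h. (if chi n (emb bs h) then 1 else 0) *
        cnj (of_int (eps_n n (emb bs h)) * of_int (epsH bs h) * psi bs h) :: complex)"
  have FT: "F (T h) = F h * cnj (w ^ c)" if h: "h \<in> Hset l1 l2" for h
  proof -
    have "chi n (emb bs (T h)) = chi n (emb bs h)"
      unfolding T_def c_def by (rule chi_mod[OF val[OF h] i0' bi' m eq(2) vq])
    moreover have "eps_n n (emb bs (T h)) = eps_n n (emb bs h)"
      unfolding T_def c_def by (rule eps_same[OF val[OF h] i0' bi' m tot])
    moreover have "epsH bs (T h) = epsH bs h"
      unfolding T_def by (rule epsH_mod[OF len[OF h] i0'])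
    moreover have "psi bs (T h) = psi bs h * w ^ c"
      unfolding T_def w_def by (rule psi_mod[OF len[OF h] i0' bi' m v0])
    ultimately show ?thesis by (simp add: F_def)
  qed
  have wc': "cnj (w ^ c) \<noteq> 1" using wc by (metis complex_cnj_cnj complex_cnj_one)
  have "sum F (Hset l1 l2) = 0" by (rule sum_zero[where F=F, OF bij FT wc'])
  then have "inner_H n l1 l2 = 0" by (simp add: inner_H_def Let_def F_def bs_def)
  then show False using assms(5) by simp
qed

end
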